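(* Let $m,n$ be positive integers and suppose $\mathbf{a},\mathbf{b}\in\mathcal{T}^{n+1}$, $\mathbf{c},\mathbf{d}\in\mathcal{T}^{n}$, $\mathbf{f},\mathbf{g}\in\mathcal{T}^{m+1}$, $\mathbf{h},\mathbf{e}\in\mathcal{T}^{m}$ satisfy \[ (\phi_{\mathbf{a}}\phi^*_{\mathbf{a}}+\phi_{\mathbf{b}}\phi^*_{\mathbf{b}}+\phi_{\mathbf{c}}\phi^*_{\mathbf{c}}+\phi_{\mathbf{d}}\phi^*_{\mathbf{d}})(x)=2(2n+1),\qquad (\phi_{\mathbf{e}}\phi^*_{\mathbf{e}}+\phi_{\mathbf{f}}\phi^*_{\mathbf{f}}+\phi_{\mathbf{g}}\phi^*_{\mathbf{g}}+\phi_{\mathbf{h}}\phi^*_{\mathbf{h}})(x)=2(2m+1) \] in $\mathcal{R}[x^{\pm1}]$. Then there exist $\mathbf{q},\mathbf{r},\mathbf{s},\mathbf{t}\in\mathcal{T}^{(2m+1)(2n+1)}$ such that \[ (\phi_{\mathbf{q}}\phi^*_{\mathbf{q}}+\phi_{\mathbf{r}}\phi^*_{\mathbf{r}}+\phi_{\mathbf{s}}\phi^*_{\mathbf{s}}+\phi_{\mathbf{t}}\phi^*_{\mathbf{t}})(x)=4(2m+1)(2n+1). \] (Equivalently, the same statement holds with $\psi$ in place of $\phi$ throughout.)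
   Context: $\mathcal{R}$ is a commutative ring with identity equipped with an involutive ring automorphism $*$, extended to $\mathcal{R}[x^{\pm1}]$ by acting on coefficients and $x\mapsto x^{-1}$; $f^*$ denotes the image of $f$. $\mathcal{T}$ is a multiplicatively closed subset of $\mathcal{R}\setminus\{0\}$ with $-1\in\mathcal{T}$ and $\mathcal{T}^*=\mathcal{T}$. For $\mathbf{a}=(a_0,\dots,a_{l-1})\in\mathcal{R}^l$, $\phi_{\mathbf{a}}(x)=\sum_{i=0}^{l-1}a_ix^i$ and $\psi_{\mathbf{a}}(x)=x^{1-l}\phi_{\mathbf{a}}(x^2)$; note $\psi_{\mathbf{a}}\psi_{\mathbf{a}}^*(x)=\phi_{\mathbf{a}}\phi^*_{\mathbf{a}}(x^2)$. *)

theory Defs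
  imports "HOL-Library.Poly_Mapping"
begin

text \<open>Laurent polynomials R[x^{+-1}] are modelled as the group ring R[Z], i.e. the
  finitely supported functions int =>0 R with convolution product (HOL-Library.Poly_Mapping).
  The monomial x^k is Poly_Mapping.single k 1.\<close>

type_synonym 'a laurent = "int \<Rightarrow>\<^sub>0 'a"

definition phi :: "'a::comm_ring_1 list \<Rightarrow> 'a laurent" where
  "phi a = (\<Sum>i<length a. Poly_Mapping.single (int i) (a ! i))"

definition lstar :: "('a::comm_ring_1 \<Rightarrow> 'a) \<Rightarrow> 'a laurent \<Rightarrow> 'a laurent" where
  "lstar st f = (\<Sum>k\<in>Poly_Mapping.keys f. Poly_Mapping.single (- k) (st (Poly_Mapping.lookup f k)))"

text \<open>psi_a(x) = x^{1-l} phi_a(x^2).\<close>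
definition psi :: "'a::comm_ring_1 list \<Rightarrow> 'a laurent" where
  "psi a = (\<Sum>i<length a. Poly_Mapping.single (2 * int i + 1 - int (length a)) (a ! i))"

end

theory Submission
  imports Defs
begin

definition hext :: "(int \<Rightarrow> 'a::comm_ring_1 \<Rightarrow> 'a laurent) \<Rightarrow> 'a laurent \<Rightarrow> 'a laurent" where
  "hext h f = (\<Sum>k\<in>Poly_Mapping.keys f. h k (Poly_Mapping.lookup f k))"

locale addh =
  fixes h :: "int \<Rightarrow> 'a::comm_ring_1 \<Rightarrow> 'a laurent"
  assumes h0: "\<And>k. h k 0 = 0" and hadd: "\<And>k x y. h k (x + y) = h k x + h k y"
begin

lemma hext_superset:
  assumes "finite S" "Poly_Mapping.keys f \<subseteq> S"
  shows "hext h f = (\<Sum>k\<in>S. h k (Poly_Mapping.lookup f k))"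
  unfolding hext_def
  by (rule sum.mono_neutral_left) (use assms in \<open>auto simp: in_keys_iff h0\<close>)

lemma hext_zero[simp]: "hext h 0 = 0" by (simp add: hext_def)

lemma hext_add: "hext h (f + g) = hext h f + hext h g"
proof -
  let ?S = "Poly_Mapping.keys f \<union> Poly_Mapping.keys g"
  have "hext h (f + g) = (\<Sum>k\<in>?S. h k (Poly_Mapping.lookup (f+g) k))"
    by (rule hext_superset) (auto simp: keys_add)
  also have "\<dots> = (\<Sum>k\<in>?S. h k (Poly_Mapping.lookup f k)) + (\<Sum>k\<in>?S. h k (Poly_Mapping.lookup g k))"
    by (simp add: lookup_add hadd sum.distrib)
  also have "\<dots> = hext h f + hext h g"
    by (subst (1 2) hext_superset[of ?S]) auto
  finally show ?thesis .
qed

lemma hext_single[simp]: "hext h (Poly_Mapping.single k c) = h k c"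
  by (cases "c = 0") (auto simp: hext_def h0)

lemma hext_sum: "hext h (sum F A) = (\<Sum>x\<in>A. hext h (F x))"
  by (induction A rule: infinite_finite_induct) (auto simp: hext_add)

lemma hext_neg: "hext h (- f) = - hext h f"
  using hext_add[of "-f" f] by (simp add: eq_neg_iff_add_eq_0)

lemma hext_diff: "hext h (f - g) = hext h f - hext h g"
  using hext_add[of f "-g"] by (simp add: hext_neg)

end

lemma pm_expand: "(f::'a::comm_ring_1 laurent) = (\<Sum>k\<in>Poly_Mapping.keys f. Poly_Mapping.single k (Poly_Mapping.lookup f k))"
proof (rule poly_mapping_eqI)
  fix j
  show "Poly_Mapping.lookup f j = Poly_Mapping.lookup (\<Sum>k\<in>Poly_Mapping.keys f. Poly_Mapping.single k (Poly_Mapping.lookup f k)) j"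
    by (cases "j \<in> Poly_Mapping.keys f")
       (auto simp: lookup_sum lookup_single when_def in_keys_iff)
qed

lemma (in addh) hext_mult:
  assumes hm: "\<And>k l a b. h (k + l) (a * b) = h k a * h l b"
  shows "hext h (f * g) = hext h f * hext h g"
proof -
  have "f * g = (\<Sum>k\<in>Poly_Mapping.keys f. Poly_Mapping.single k (Poly_Mapping.lookup f k)) *
                (\<Sum>l\<in>Poly_Mapping.keys g. Poly_Mapping.single l (Poly_Mapping.lookup g l))"
    by (metis pm_expand)
  also have "\<dots> = (\<Sum>k\<in>Poly_Mapping.keys f. \<Sum>l\<in>Poly_Mapping.keys g.
       Poly_Mapping.single (k + l) (Poly_Mapping.lookup f k * Poly_Mapping.lookup g l))"
    by (simp add: sum_product mult_single)
  finally have "hext h (f * g) = (\<Sum>k\<in>Poly_Mapping.keys f. \<Sum>l\<in>Poly_Mapping.keys g.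
       h k (Poly_Mapping.lookup f k) * h l (Poly_Mapping.lookup g l))"
    by (simp add: hext_sum hm)
  also have "\<dots> = hext h f * hext h g"
    by (simp add: hext_def sum_product)
  finally show ?thesis .
qed


locale stl =
  fixes st :: "'a::comm_ring_1 \<Rightarrow> 'a"
  assumes st_add: "\<And>x y. st (x + y) = st x + st y"
    and st_mult: "\<And>x y. st (x * y) = st x * st y"
    and st_one: "st 1 = 1"
    and st_invol: "\<And>x. st (st x) = x"
begin

lemma st0[simp]: "st 0 = 0"
  using st_add[of 0 0] by simp

lemma lstar_hext: "lstar st f = hext (\<lambda>k c. Poly_Mapping.single (-k) (st c)) f"
  by (simp add: lstar_def hext_def)

sublocale L: addh "\<lambda>k c. Poly_Mapping.single (-k) (st c)"
  by unfold_locales (auto simp: st_add single_add)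

lemma lstar_add: "lstar st (f + g) = lstar st f + lstar st g"
  by (simp add: lstar_hext L.hext_add)
lemma lstar_neg: "lstar st (- f) = - lstar st f"
  by (simp add: lstar_hext L.hext_neg)
lemma lstar_diff: "lstar st (f - g) = lstar st f - lstar st g"
  by (simp add: lstar_hext L.hext_diff)
lemma lstar_single: "lstar st (Poly_Mapping.single k c) = Poly_Mapping.single (-k) (st c)"
  by (simp add: lstar_hext)
lemma lstar_sum: "lstar st (sum F A) = (\<Sum>x\<in>A. lstar st (F x))"
  by (simp add: lstar_hext L.hext_sum)
lemma lstar_mult: "lstar st (f * g) = lstar st f * lstar st g"
  unfolding lstar_hext
  by (rule L.hext_mult) (simp add: st_mult mult_single)
lemma lstar_invol: "lstar st (lstar st f) = f"
proof -
  have "lstar st (lstar st f) = (\<Sum>k\<in>Poly_Mapping.keys f. lstar st (lstar st (Poly_Mapping.single k (Poly_Mapping.lookup f k))))"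
    by (subst (1) pm_expand[of f]) (simp add: lstar_sum)
  also have "\<dots> = f"
    by (simp add: lstar_single st_invol flip: pm_expand)
  finally show ?thesis .
qed
lemma lstar_of_nat: "lstar st (of_nat n) = of_nat n"
proof -
  have "st (of_nat n) = of_nat n" by (induction n) (auto simp: st_add st_one)
  then show ?thesis by (simp flip: single_of_nat add: lstar_single)
qed

end

definition sig :: "int \<Rightarrow> 'a::comm_ring_1 laurent \<Rightarrow> 'a laurent" where
  "sig p = hext (\<lambda>k c. Poly_Mapping.single (p * k) c)"

interpretation S: addh "\<lambda>k c. Poly_Mapping.single (p * k) c"
  by unfold_locales (auto simp: single_add)

lemma sig_single: "sig p (Poly_Mapping.single k c) = Poly_Mapping.single (p * k) c"
  by (simp add: sig_def)
lemma sig_sum: "sig p (sum F A) = (\<Sum>x\<in>A. sig p (F x))"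
  by (simp add: sig_def S.hext_sum)
lemma sig_add: "sig p (f + g) = sig p f + sig p g"
  by (simp add: sig_def S.hext_add)
lemma sig_mult: "sig p (f * g) = sig p f * sig p g"
  unfolding sig_def
  by (rule S.hext_mult) (simp add: mult_single distrib_left)
lemma sig_of_nat: "sig p (of_nat n) = of_nat n"
  by (simp flip: single_of_nat add: sig_single)

lemma (in stl) lstar_sig: "lstar st (sig p f) = sig p (lstar st f)"
proof -
  have "lstar st (sig p f) = (\<Sum>k\<in>Poly_Mapping.keys f. lstar st (sig p (Poly_Mapping.single k (Poly_Mapping.lookup f k))))"
    by (subst (1) pm_expand[of f]) (simp add: lstar_sum sig_sum)
  also have "\<dots> = (\<Sum>k\<in>Poly_Mapping.keys f. sig p (lstar st (Poly_Mapping.single k (Poly_Mapping.lookup f k))))"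
    by (simp add: lstar_single sig_single)
  also have "\<dots> = sig p (lstar st f)"
    by (subst (2) pm_expand[of f]) (simp add: lstar_sum sig_sum)
  finally show ?thesis .
qed

definition gseq :: "int \<Rightarrow> int \<Rightarrow> 'a::comm_ring_1 list \<Rightarrow> 'a laurent" where
  "gseq oo p xs = (\<Sum>i<length xs. Poly_Mapping.single (oo + p * int i) (xs ! i))"

lemma gseq_sig: "gseq oo p xs = Poly_Mapping.single oo 1 * sig p (phi xs)"
  by (simp add: gseq_def phi_def sig_sum sig_single sum_distrib_left mult_single)

lemma (in stl) gseq_norm:
  "gseq oo p xs * lstar st (gseq oo p xs) = sig p (phi xs * lstar st (phi xs))"
proof -
  have "gseq oo p xs * lstar st (gseq oo p xs) =
     (Poly_Mapping.single oo 1 * Poly_Mapping.single (-oo) 1) * (sig p (phi xs) * sig p (lstar st (phi xs)))"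
    by (simp add: gseq_sig lstar_mult lstar_single st_one lstar_sig mult_ac)
  also have "\<dots> = sig p (phi xs * lstar st (phi xs))"
    by (simp add: mult_single sig_mult)
  finally show ?thesis .
qed

lemma gseq_neg: "gseq oo p (map uminus xs) = - gseq oo p xs"
  by (simp add: gseq_def single_uminus sum_negf)

lemma (in stl) lstar_gseq:
  "lstar st (gseq oo p xs) = gseq (-(oo + p * (int (length xs) - 1))) p (map st (rev xs))"
proof -
  let ?l = "length xs"
  have "lstar st (gseq oo p xs) = (\<Sum>i<?l. Poly_Mapping.single (-(oo + p * int i)) (st (xs ! i)))"
    by (simp add: gseq_def lstar_sum lstar_single)
  also have "\<dots> = (\<Sum>j<?l. Poly_Mapping.single (-(oo + p * (int ?l - 1)) + p * int j) (st (rev xs ! j)))"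
  proof (rule sum.reindex_bij_witness[of _ "\<lambda>j. ?l - 1 - j" "\<lambda>i. ?l - 1 - i"])
    fix i assume "i \<in> {..<?l}"
    then show "Poly_Mapping.single (- (oo + p * (int ?l - 1)) + p * int (?l - 1 - i)) (st (rev xs ! (?l - 1 - i))) =
       Poly_Mapping.single (- (oo + p * int i)) (st (xs ! i))"
      by (auto simp: rev_nth of_nat_diff algebra_simps)
  qed auto
  also have "\<dots> = gseq (-(oo + p * (int (length xs) - 1))) p (map st (rev xs))"
    by (simp add: gseq_def)
  finally show ?thesis .
qed

lemma gseq_mult:
  "gseq o1 p1 X * gseq o2 p2 Y =
   (\<Sum>i<length X. \<Sum>j<length Y. Poly_Mapping.single (o1 + p1 * int i + (o2 + p2 * int j)) (X ! i * Y ! j))"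
  by (simp add: gseq_def sum_product mult_single)

lemma phi_gseq: "phi xs = gseq 0 1 xs"
  by (simp add: phi_def gseq_def)


lemma sum_lessThan_add: "(\<Sum>t<(a::nat) + b. w t) = (\<Sum>t<a. w t) + (\<Sum>u<b. w (a + u))"
  by (induction b) (auto simp: add_ac)

lemma sum_blocks: "(\<Sum>t<(k::nat) * P. w t) = (\<Sum>v<k. \<Sum>u<P. w (u + P * v))"
proof (induction k)
  case (Suc k)
  have "(\<Sum>t<Suc k * P. w t) = (\<Sum>t<k * P + P. w t)" by (simp add: add_ac)
  also have "\<dots> = (\<Sum>t<k * P. w t) + (\<Sum>u<P. w (k * P + u))" by (rule sum_lessThan_add)
  finally show ?case using Suc by (simp add: add_ac mult_ac)
qed simp

lemma sum_odd_even: "(\<Sum>u<2 * (n::nat) + 1. w u) = (\<Sum>i<n + 1. w (2 * i)) + (\<Sum>i<n. w (2 * i + 1))"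
proof (induction n)
  case (Suc n)
  have e: "2 * Suc n + 1 = Suc (Suc (2 * n + 1))" by simp
  show ?case unfolding e using Suc by (simp add: add_ac)
qed simp

definition qf :: "nat \<Rightarrow> 'a::comm_ring_1 list \<Rightarrow> 'a list \<Rightarrow> 'a list \<Rightarrow> 'a list \<Rightarrow>
   'a list \<Rightarrow> 'a list \<Rightarrow> 'a list \<Rightarrow> 'a list \<Rightarrow> nat \<Rightarrow> 'a" where
  "qf P X1 X1' X2 X2' Y1 Y1' Y2 Y2' t = (let u = t mod P; v = t div P in
     if even u then (if even v then X1 ! (u div 2) * Y1 ! (v div 2) else X1' ! (u div 2) * Y2 ! (v div 2))
     else (if even v then X2 ! (u div 2) * Y1' ! (v div 2) else X2' ! (u div 2) * Y2' ! (v div 2)))"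

lemma qf_eval: "u < P \<Longrightarrow> qf P X1 X1' X2 X2' Y1 Y1' Y2 Y2' (u + P * v) =
     (if even u then (if even v then X1 ! (u div 2) * Y1 ! (v div 2) else X1' ! (u div 2) * Y2 ! (v div 2))
     else (if even v then X2 ! (u div 2) * Y1' ! (v div 2) else X2' ! (u div 2) * Y2' ! (v div 2)))"
  by (simp add: qf_def)

lemma gseq_mult_swap:
  "gseq o1 p1 X * gseq o2 p2 Y =
   (\<Sum>j<length Y. \<Sum>i<length X. Poly_Mapping.single (o1 + p1 * int i + (o2 + p2 * int j)) (X ! i * Y ! j))"
  by (simp add: gseq_mult sum.swap[of _ "{..<length Y}"])

lemma grid:
  fixes X1 X1' X2 X2' Y1 Y1' Y2 Y2' :: "'a::comm_ring_1 list"
  assumes l: "length X1 = n+1" "length X1' = n+1" "length X2 = n" "length X2' = n"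
     "length Y1 = m+1" "length Y1' = m+1" "length Y2 = m" "length Y2' = m"
  assumes P: "P = 2*n+1"
  shows "gseq (-int n) 2 X1 * gseq (-(int m * int P)) (2*int P) Y1
       + gseq (-int n) 2 X1' * gseq ((1 - int m)*int P) (2*int P) Y2
       + gseq (1 - int n) 2 X2 * gseq (-(int m*int P)) (2*int P) Y1'
       + gseq (1 - int n) 2 X2' * gseq ((1-int m)*int P) (2*int P) Y2'
     = Poly_Mapping.single (-(int n + int P * int m)) 1 * phi (map (qf P X1 X1' X2 X2' Y1 Y1' Y2 Y2') [0..<(2*m+1)*P])"
    (is "?L = ?R")
proof -
  define N where "N = int n + int P * int m"
  have so: "(\<Sum>u<P. w u) = (\<Sum>i<n + 1. w (2 * i)) + (\<Sum>i<n. w (2 * i + 1))" for w :: "nat \<Rightarrow> 'a laurent"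
    unfolding P by (rule sum_odd_even)
  define W where "W t = Poly_Mapping.single (- N + int t) (qf P X1 X1' X2 X2' Y1 Y1' Y2 Y2' t)" for t
  have "?R = (\<Sum>t<(2*m+1)*P. W t)"
    by (simp add: phi_def sum_distrib_left mult_single W_def N_def)
  also have "\<dots> = (\<Sum>v<2*m+1. \<Sum>u<P. W (u + P * v))"
    by (rule sum_blocks)
  also have "\<dots> = (\<Sum>v<2*m+1. (\<Sum>i<n+1. W (2*i + P * v)) + (\<Sum>i<n. W (2*i+1 + P * v)))"
    by (simp only: so)
  also have "\<dots> = (\<Sum>j<m+1. \<Sum>i<n+1. W (2*i + P * (2*j))) + (\<Sum>j<m. \<Sum>i<n+1. W (2*i + P * (2*j+1)))
      + ((\<Sum>j<m+1. \<Sum>i<n. W (2*i+1 + P * (2*j))) + (\<Sum>j<m. \<Sum>i<n. W (2*i+1 + P * (2*j+1))))"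
  proof -
    have A1: "(\<Sum>v<2*m+1. \<Sum>i<n+1. W (2*i + P * v)) = (\<Sum>j<m+1. \<Sum>i<n+1. W (2*i + P * (2*j))) + (\<Sum>j<m. \<Sum>i<n+1. W (2*i + P * (2*j+1)))"
      by (rule sum_odd_even)
    have A2: "(\<Sum>v<2*m+1. \<Sum>i<n. W (2*i+1 + P * v)) = (\<Sum>j<m+1. \<Sum>i<n. W (2*i+1 + P * (2*j))) + (\<Sum>j<m. \<Sum>i<n. W (2*i+1 + P * (2*j+1)))"
      by (rule sum_odd_even)
    show ?thesis unfolding sum.distrib A1 A2 by (simp add: ac_simps)
  qed
  finally have R: "?R = \<dots>" .
  have lt1: "2*i < P" if "i < n+1" for i using that P by simp
  have lt2: "2*i+1 < P" if "i < n" for i using that P by simp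
  have e1: "gseq (-int n) 2 X1 * gseq (-(int m * int P)) (2*int P) Y1 = (\<Sum>j<m+1. \<Sum>i<n+1. W (2*i + P * (2*j)))"
    unfolding gseq_mult_swap l
    unfolding W_def by (intro sum.cong refl arg_cong2[where f=Poly_Mapping.single]) (simp add: N_def algebra_simps, subst qf_eval, simp_all add: lt1)
  have e2: "gseq (-int n) 2 X1' * gseq ((1 - int m)*int P) (2*int P) Y2 = (\<Sum>j<m. \<Sum>i<n+1. W (2*i + P * (2*j+1)))"
    unfolding gseq_mult_swap l
    unfolding W_def by (intro sum.cong refl arg_cong2[where f=Poly_Mapping.single]) (simp add: N_def algebra_simps, subst qf_eval, simp_all add: lt1)
  have e3: "gseq (1 - int n) 2 X2 * gseq (-(int m*int P)) (2*int P) Y1' = (\<Sum>j<m+1. \<Sum>i<n. W (2*i+1 + P * (2*j)))"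
    unfolding gseq_mult_swap l
    unfolding W_def by (intro sum.cong refl arg_cong2[where f=Poly_Mapping.single]) (simp add: N_def algebra_simps, subst qf_eval, simp_all add: lt2 P)
  have e4: "gseq (1 - int n) 2 X2' * gseq ((1-int m)*int P) (2*int P) Y2' = (\<Sum>j<m. \<Sum>i<n. W (2*i+1 + P * (2*j+1)))"
    unfolding gseq_mult_swap l
    unfolding W_def by (intro sum.cong refl arg_cong2[where f=Poly_Mapping.single]) (simp add: N_def algebra_simps, subst qf_eval, simp_all add: lt2 P)
  show ?thesis unfolding R e1 e2 e3 e4 by (simp add: add_ac)
qed


lemma euler_id:
  fixes A B C D E F G H sA sB sC sD sE sF sG sH :: "'b::comm_ring_1"
  shows "(A*F - B*sE - C*sG - sD*H) * (sA*sF - sB*E - sC*G - D*sH)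
       + (B*sF + A*E - D*sG + sC*H) * (sB*F + sA*sE - sD*G + C*sH)
       + (A*G - sB*H + C*sF + D*sE) * (sA*sG - B*sH + sC*F + sD*E)
       + (B*G + sA*H + D*F - C*E) * (sB*sG + A*sH + sD*sF - sC*sE)
     = (A*sA + B*sB + C*sC + D*sD) * (E*sE + F*sF + G*sG + H*sH)"
  by (simp add: algebra_simps)

lemma qf_in:
  assumes l: "length X1 = n+1" "length X1' = n+1" "length X2 = n" "length X2' = n"
     "length Y1 = m+1" "length Y1' = m+1" "length Y2 = m" "length Y2' = m"
  and s: "set X1 \<subseteq> T" "set X1' \<subseteq> T" "set X2 \<subseteq> T" "set X2' \<subseteq> T"
     "set Y1 \<subseteq> T" "set Y1' \<subseteq> T" "set Y2 \<subseteq> T" "set Y2' \<subseteq> T"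
  and TM: "\<And>x y. x \<in> T \<Longrightarrow> y \<in> T \<Longrightarrow> x * y \<in> T"
  and P: "P = 2*n+1" and t: "t < (2*m+1) * P"
  shows "qf P X1 X1' X2 X2' Y1 Y1' Y2 Y2' t \<in> T"
proof -
  define u where "u = t mod P"
  define v where "v = t div P"
  have u: "u < 2*n+1" using P by (simp add: u_def)
  have v: "v < 2*m+1" using t P by (simp add: v_def less_mult_imp_div_less)
  have ue: "even u \<Longrightarrow> u div 2 < n+1" and uo: "odd u \<Longrightarrow> u div 2 < n" using u by presburger+
  have ve: "even v \<Longrightarrow> v div 2 < m+1" and vo: "odd v \<Longrightarrow> v div 2 < m" using v by presburger+
  have mem: "xs ! i \<in> T" if "set xs \<subseteq> T" "i < length xs" for xs i
    using that nth_mem by blast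
  show ?thesis
    unfolding qf_def Let_def u_def[symmetric] v_def[symmetric]
    using ue uo ve vo l s by (auto intro!: TM mem)
qed

theorem theorem3p3:
  fixes st :: "'a::comm_ring_1 \<Rightarrow> 'a" and T :: "'a set"
    and m n :: nat and a b c d f g h e :: "'a list"
  assumes st_add: "\<And>x y. st (x + y) = st x + st y"
    and st_mult: "\<And>x y. st (x * y) = st x * st y"
    and st_one: "st 1 = 1"
    and st_invol: "\<And>x. st (st x) = x"
    and T_sub: "T \<subseteq> UNIV - {0}"
    and T_mult: "\<And>x y. x \<in> T \<Longrightarrow> y \<in> T \<Longrightarrow> x * y \<in> T"
    and T_neg1: "- 1 \<in> T"
    and T_star: "st ` T = T"
    and mn: "0 < m" "0 < n"
    and a: "length a = n + 1" "set a \<subseteq> T"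
    and b: "length b = n + 1" "set b \<subseteq> T"
    and c: "length c = n" "set c \<subseteq> T"
    and d: "length d = n" "set d \<subseteq> T"
    and f: "length f = m + 1" "set f \<subseteq> T"
    and g: "length g = m + 1" "set g \<subseteq> T"
    and h: "length h = m" "set h \<subseteq> T"
    and e: "length e = m" "set e \<subseteq> T"
    and abcd: "phi a * lstar st (phi a) + phi b * lstar st (phi b)
               + phi c * lstar st (phi c) + phi d * lstar st (phi d)
               = of_nat (2 * (2 * n + 1))"
    and efgh: "phi e * lstar st (phi e) + phi f * lstar st (phi f)
               + phi g * lstar st (phi g) + phi h * lstar st (phi h)
               = of_nat (2 * (2 * m + 1))"
  shows "\<exists>q r s t :: 'a list.
           length q = (2 * m + 1) * (2 * n + 1) \<and> set q \<subseteq> T \<and>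
           length r = (2 * m + 1) * (2 * n + 1) \<and> set r \<subseteq> T \<and>
           length s = (2 * m + 1) * (2 * n + 1) \<and> set s \<subseteq> T \<and>
           length t = (2 * m + 1) * (2 * n + 1) \<and> set t \<subseteq> T \<and>
           phi q * lstar st (phi q) + phi r * lstar st (phi r)
             + phi s * lstar st (phi s) + phi t * lstar st (phi t)
           = of_nat (4 * (2 * m + 1) * (2 * n + 1))"
proof -
  interpret stl st by unfold_locales (fact st_add st_mult st_one st_invol)+
  define P where "P = 2*n+1"
  define L where "L = (2*m+1)*P"
  define N where "N = int n + int P * int m"
  define sx where "sx xs = map st (rev xs)" for xs :: "'a list"
  define ng where "ng xs = map uminus xs" for xs :: "'a list"
  define oa where "oa = - int n"
  define oc where "oc = 1 - int n"
  define ofs where "ofs = - (int m * int P)"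
  define oe where "oe = (1 - int m) * int P"
  define A where "A = gseq oa 2 a"
  define B where "B = gseq oa 2 b"
  define C where "C = gseq oc 2 c"
  define D where "D = gseq oc 2 d"
  define F where "F = gseq ofs (2 * int P) f"
  define G where "G = gseq ofs (2 * int P) g"
  define E where "E = gseq oe (2 * int P) e"
  define H where "H = gseq oe (2 * int P) h"
  have sA: "lstar st A = gseq oa 2 (sx a)" unfolding A_def sx_def lstar_gseq using a by (simp add: oa_def)
  have sB: "lstar st B = gseq oa 2 (sx b)" unfolding B_def sx_def lstar_gseq using b by (simp add: oa_def)
  have sC: "lstar st C = gseq oc 2 (sx c)" unfolding C_def sx_def lstar_gseq using c mn by (simp add: oc_def)
  have sD: "lstar st D = gseq oc 2 (sx d)" unfolding D_def sx_def lstar_gseq using d mn by (simp add: oc_def)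
  have sF: "lstar st F = gseq ofs (2 * int P) (sx f)" unfolding F_def sx_def lstar_gseq using f by (simp add: ofs_def algebra_simps)
  have sG: "lstar st G = gseq ofs (2 * int P) (sx g)" unfolding G_def sx_def lstar_gseq using g by (simp add: ofs_def algebra_simps)
  have sE: "lstar st E = gseq oe (2 * int P) (sx e)" unfolding E_def sx_def lstar_gseq using e mn by (simp add: oe_def algebra_simps)
  have sH: "lstar st H = gseq oe (2 * int P) (sx h)" unfolding H_def sx_def lstar_gseq using h mn by (simp add: oe_def algebra_simps)
  have nA: "A * lstar st A + B * lstar st B + C * lstar st C + D * lstar st D = of_nat (2 * (2 * n + 1))"
    unfolding A_def B_def C_def D_def gseq_norm
    by (simp only: abcd sig_add[symmetric] sig_of_nat)
  have nE: "E * lstar st E + F * lstar st F + G * lstar st G + H * lstar st H = of_nat (2 * (2 * m + 1))"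
    unfolding E_def F_def G_def H_def gseq_norm
    by (simp only: efgh sig_add[symmetric] sig_of_nat)
  have lsx: "length (sx xs) = length xs" for xs by (simp add: sx_def)
  have lng: "length (ng xs) = length xs" for xs by (simp add: ng_def)
  have ssx: "set xs \<subseteq> T \<Longrightarrow> set (sx xs) \<subseteq> T" for xs
    unfolding sx_def using T_star by auto
  have sng: "set xs \<subseteq> T \<Longrightarrow> set (ng xs) \<subseteq> T" for xs
    unfolding ng_def using T_mult[OF T_neg1] by auto
  have gng: "gseq o1 p1 (ng xs) = - gseq o1 p1 xs" for o1 p1 xs by (simp add: ng_def gseq_neg)
  have ex: "\<And>X1 X1' X2 X2' Y1 Y1' Y2 Y2'. length X1 = n+1 \<Longrightarrow> length X1' = n+1 \<Longrightarrow> length X2 = n \<Longrightarrow> length X2' = n \<Longrightarrow>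
     length Y1 = m+1 \<Longrightarrow> length Y1' = m+1 \<Longrightarrow> length Y2 = m \<Longrightarrow> length Y2' = m \<Longrightarrow>
     set X1 \<subseteq> T \<Longrightarrow> set X1' \<subseteq> T \<Longrightarrow> set X2 \<subseteq> T \<Longrightarrow> set X2' \<subseteq> T \<Longrightarrow>
     set Y1 \<subseteq> T \<Longrightarrow> set Y1' \<subseteq> T \<Longrightarrow> set Y2 \<subseteq> T \<Longrightarrow> set Y2' \<subseteq> T \<Longrightarrow>
     \<exists>q. length q = L \<and> set q \<subseteq> T \<and>
       (let Ox = gseq oa 2 X1 * gseq ofs (2*int P) Y1 + gseq oa 2 X1' * gseq oe (2*int P) Y2
          + gseq oc 2 X2 * gseq ofs (2*int P) Y1' + gseq oc 2 X2' * gseq oe (2*int P) Y2'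
        in Ox * lstar st Ox = phi q * lstar st (phi q))"
  proof -
    fix X1 X1' X2 X2' Y1 Y1' Y2 Y2' :: "'a list"
    assume l: "length X1 = n+1" "length X1' = n+1" "length X2 = n" "length X2' = n"
     "length Y1 = m+1" "length Y1' = m+1" "length Y2 = m" "length Y2' = m"
    assume s: "set X1 \<subseteq> T" "set X1' \<subseteq> T" "set X2 \<subseteq> T" "set X2' \<subseteq> T"
     "set Y1 \<subseteq> T" "set Y1' \<subseteq> T" "set Y2 \<subseteq> T" "set Y2' \<subseteq> T"
    define q where "q = map (qf P X1 X1' X2 X2' Y1 Y1' Y2 Y2') [0..<L]"
    have gr: "gseq oa 2 X1 * gseq ofs (2*int P) Y1 + gseq oa 2 X1' * gseq oe (2*int P) Y2
          + gseq oc 2 X2 * gseq ofs (2*int P) Y1' + gseq oc 2 X2' * gseq oe (2*int P) Y2'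
         = Poly_Mapping.single (-N) 1 * phi q"
      unfolding oa_def oc_def ofs_def oe_def q_def L_def N_def
      by (rule grid[OF l P_def])
    have "set q \<subseteq> T" unfolding q_def L_def
      using qf_in[OF l s T_mult P_def] by auto
    moreover have "length q = L" by (simp add: q_def)
    moreover have "Poly_Mapping.single (-N) 1 * phi q * lstar st (Poly_Mapping.single (-N) 1 * phi q)
        = phi q * lstar st (phi q)"
    proof -
      have "Poly_Mapping.single (-N) 1 * phi q * lstar st (Poly_Mapping.single (-N) 1 * phi q)
          = (Poly_Mapping.single (-N) 1 * Poly_Mapping.single N 1) * (phi q * lstar st (phi q))"
        by (simp add: lstar_mult lstar_single st_one mult_ac)
      also have "\<dots> = phi q * lstar st (phi q)" by (simp add: mult_single)
      finally show ?thesis .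
    qed
    ultimately show "\<exists>q. length q = L \<and> set q \<subseteq> T \<and>
       (let Ox = gseq oa 2 X1 * gseq ofs (2*int P) Y1 + gseq oa 2 X1' * gseq oe (2*int P) Y2
          + gseq oc 2 X2 * gseq ofs (2*int P) Y1' + gseq oc 2 X2' * gseq oe (2*int P) Y2'
        in Ox * lstar st Ox = phi q * lstar st (phi q))"
      unfolding Let_def gr by blast
  qed
  have "\<exists>q. length q = L \<and> set q \<subseteq> T \<and> (A*F + -B*lstar st E + -C*lstar st G + -lstar st D*H) * lstar st (A*F + -B*lstar st E + -C*lstar st G + -lstar st D*H) = phi q * lstar st (phi q)"
    using ex[of a "ng b" "ng c" "ng (sx d)" f "sx g" "sx e" h] unfolding Let_def gng sA[symmetric] sB[symmetric] sC[symmetric] sD[symmetric] sE[symmetric] sF[symmetric] sG[symmetric] sH[symmetric] A_def[symmetric] B_def[symmetric] C_def[symmetric] D_def[symmetric] E_def[symmetric] F_def[symmetric] G_def[symmetric] H_def[symmetric] by (simp add: a b c d e f g h lsx lng ssx sng)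
  then obtain q0 where q0: "length q0 = L" "set q0 \<subseteq> T"
    "(A*F + -B*lstar st E + -C*lstar st G + -lstar st D*H) * lstar st (A*F + -B*lstar st E + -C*lstar st G + -lstar st D*H) = phi q0 * lstar st (phi q0)" by blast
  have "\<exists>q. length q = L \<and> set q \<subseteq> T \<and> (B*lstar st F + A*E + -D*lstar st G + lstar st C*H) * lstar st (B*lstar st F + A*E + -D*lstar st G + lstar st C*H) = phi q * lstar st (phi q)"
    using ex[of b a "ng d" "sx c" "sx f" "sx g" e h] unfolding Let_def gng sA[symmetric] sB[symmetric] sC[symmetric] sD[symmetric] sE[symmetric] sF[symmetric] sG[symmetric] sH[symmetric] A_def[symmetric] B_def[symmetric] C_def[symmetric] D_def[symmetric] E_def[symmetric] F_def[symmetric] G_def[symmetric] H_def[symmetric] by (simp add: a b c d e f g h lsx lng ssx sng)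
  then obtain q1 where q1: "length q1 = L" "set q1 \<subseteq> T"
    "(B*lstar st F + A*E + -D*lstar st G + lstar st C*H) * lstar st (B*lstar st F + A*E + -D*lstar st G + lstar st C*H) = phi q1 * lstar st (phi q1)" by blast
  have "\<exists>q. length q = L \<and> set q \<subseteq> T \<and> (A*G + -lstar st B*H + C*lstar st F + D*lstar st E) * lstar st (A*G + -lstar st B*H + C*lstar st F + D*lstar st E) = phi q * lstar st (phi q)"
    using ex[of a "ng (sx b)" c d g "sx f" h "sx e"] unfolding Let_def gng sA[symmetric] sB[symmetric] sC[symmetric] sD[symmetric] sE[symmetric] sF[symmetric] sG[symmetric] sH[symmetric] A_def[symmetric] B_def[symmetric] C_def[symmetric] D_def[symmetric] E_def[symmetric] F_def[symmetric] G_def[symmetric] H_def[symmetric] by (simp add: a b c d e f g h lsx lng ssx sng)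
  then obtain q2 where q2: "length q2 = L" "set q2 \<subseteq> T"
    "(A*G + -lstar st B*H + C*lstar st F + D*lstar st E) * lstar st (A*G + -lstar st B*H + C*lstar st F + D*lstar st E) = phi q2 * lstar st (phi q2)" by blast
  have "\<exists>q. length q = L \<and> set q \<subseteq> T \<and> (B*G + lstar st A*H + D*F + -C*E) * lstar st (B*G + lstar st A*H + D*F + -C*E) = phi q * lstar st (phi q)"
    using ex[of b "sx a" d "ng c" g f h e] unfolding Let_def gng sA[symmetric] sB[symmetric] sC[symmetric] sD[symmetric] sE[symmetric] sF[symmetric] sG[symmetric] sH[symmetric] A_def[symmetric] B_def[symmetric] C_def[symmetric] D_def[symmetric] E_def[symmetric] F_def[symmetric] G_def[symmetric] H_def[symmetric] by (simp add: a b c d e f g h lsx lng ssx sng)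
  then obtain q3 where q3: "length q3 = L" "set q3 \<subseteq> T"
    "(B*G + lstar st A*H + D*F + -C*E) * lstar st (B*G + lstar st A*H + D*F + -C*E) = phi q3 * lstar st (phi q3)" by blast
  have key: "(A*F + -B*lstar st E + -C*lstar st G + -lstar st D*H) * lstar st (A*F + -B*lstar st E + -C*lstar st G + -lstar st D*H) + (B*lstar st F + A*E + -D*lstar st G + lstar st C*H) * lstar st (B*lstar st F + A*E + -D*lstar st G + lstar st C*H) + (A*G + -lstar st B*H + C*lstar st F + D*lstar st E) * lstar st (A*G + -lstar st B*H + C*lstar st F + D*lstar st E) + (B*G + lstar st A*H + D*F + -C*E) * lstar st (B*G + lstar st A*H + D*F + -C*E) = (A * lstar st A + B * lstar st B + C * lstar st C + D * lstar st D) * (E * lstar st E + F * lstar st F + G * lstar st G + H * lstar st H)"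
    unfolding lstar_add lstar_mult lstar_neg lstar_invol by (simp add: algebra_simps)
  show ?thesis
  proof (intro exI conjI)
    show "phi q0 * lstar st (phi q0) + phi q1 * lstar st (phi q1) + phi q2 * lstar st (phi q2) + phi q3 * lstar st (phi q3)
       = of_nat (4 * (2 * m + 1) * (2 * n + 1))"
      proof -
        have ar: "(2*(2*n+1))*(2*(2*m+1)) = 4*(2*m+1)*(2*(n::nat)+1)" by (simp add: algebra_simps)
        show ?thesis using key unfolding q0(3) q1(3) q2(3) q3(3) nA nE of_nat_mult[symmetric] ar .
      qed
  qed (use q0 q1 q2 q3 in \<open>simp_all add: L_def P_def\<close>)
qed

end
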